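(* Let $n$ be a positive integer and consider the function $f(m)=\binom{n}{m}m^3$ defined for integers $0\le m\le n$. Then $f$ is maximized at $m=\lceil n/2\rceil+1$ if $n\ge 2$, and at $m=1$ if $n=1$. *)

theory Defs
  imports Complex_Main
begin

definition f_cube :: "nat \<Rightarrow> nat \<Rightarrow> nat" where
  "f_cube n m = (n choose m) * m ^ 3"

end

theory Submission
  imports Defs
begin

lemma fstep: "f_cube n (Suc m) = (n choose m) * (n - m) * (Suc m)^2"
proof -
  have "Suc m * (n choose Suc m) = (n - m) * (n choose m)"
    using binomial_absorption[of m n] binomial_absorb_comp[of n m] by simp
  have "f_cube n (Suc m) = (Suc m * (n choose Suc m)) * (Suc m)^2"
    unfolding f_cube_def by (simp only: power2_eq_square power3_eq_cube mult_ac)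
  also have "\<dots> = (n choose m) * (n - m) * (Suc m)^2" using \<open>Suc m * _ = _\<close> by simp
  finally show ?thesis .
qed

lemma poly_up: "m \<ge> 2 \<Longrightarrow> m^3 \<le> (m - 1) * (Suc m)^2"
proof -
  assume "m \<ge> 2"
  then obtain k where k: "m = k + 2" by (metis add.commute le_Suc_ex)
  show ?thesis unfolding k by (simp add: power2_eq_square power3_eq_cube algebra_simps)
qed

lemma poly_down: "(m - 2) * (Suc m)^2 \<le> m^3"
proof (cases "m \<ge> 2")
  case True
  then obtain k where k: "m = k + 2" by (metis add.commute le_Suc_ex)
  show ?thesis unfolding k by (simp add: power2_eq_square power3_eq_cube algebra_simps)
qed simp

lemma up:
  assumes "n \<ge> 2" "2 * m \<le> n + 1"
  shows "f_cube n m \<le> f_cube n (Suc m)"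
proof (cases "m = 0")
  case True then show ?thesis by (simp add: f_cube_def)
next
  case False
  have "m^3 \<le> (n - m) * (Suc m)^2"
  proof (cases "m = 1")
    case True then show ?thesis using assms by simp
  next
    case False
    with \<open>m \<noteq> 0\<close> have "m \<ge> 2" by simp
    have "(m - 1) * (Suc m)^2 \<le> (n - m) * (Suc m)^2"
      using assms by (intro mult_le_mono1) simp
    then show ?thesis using poly_up[OF \<open>m \<ge> 2\<close>] by linarith
  qed
  then have "(n choose m) * m^3 \<le> (n choose m) * ((n - m) * (Suc m)^2)"
    by (rule mult_le_mono2)
  then show ?thesis unfolding fstep by (simp add: f_cube_def mult_ac)
qed

lemma down:
  assumes "n + 2 \<le> 2 * m"
  shows "f_cube n (Suc m) \<le> f_cube n m"
proof -
  have "(n - m) * (Suc m)^2 \<le> (m - 2) * (Suc m)^2"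
    using assms by (intro mult_le_mono1) simp
  then have "(n - m) * (Suc m)^2 \<le> m^3" using poly_down[of m] by linarith
  then have "(n choose m) * ((n - m) * (Suc m)^2) \<le> (n choose m) * m^3"
    by (rule mult_le_mono2)
  then show ?thesis unfolding fstep by (simp add: f_cube_def mult_ac)
qed

theorem proposition2:
  fixes n :: nat
  assumes "n \<ge> 1"
  defines "M \<equiv> (if n \<ge> 2 then nat \<lceil>real n / 2\<rceil> + 1 else 1)"
  shows "M \<le> n \<and> (\<forall>m \<le> n. f_cube n m \<le> f_cube n M)"
proof (cases "n \<ge> 2")
  case False
  then have n1: "n = 1" "M = 1" using assms by (auto simp: M_def)
  show ?thesis
  proof (intro conjI allI impI)
    fix m assume "m \<le> n"
    then have "m = 0 \<or> m = 1" using n1 by auto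
    then show "f_cube n m \<le> f_cube n M" using n1 by (auto simp: f_cube_def)
  qed (simp add: n1)
next
  case True
  have c: "nat \<lceil>real n / 2\<rceil> = (n + 1) div 2"
  proof -
    have "\<lceil>real n / 2\<rceil> = int ((n + 1) div 2)"
    proof (rule ceiling_unique)
      show "real_of_int (int ((n + 1) div 2)) - 1 < real n / 2" by linarith
      show "real n / 2 \<le> real_of_int (int ((n + 1) div 2))" by linarith
    qed
    then show ?thesis by simp
  qed
  have M: "M = (n + 1) div 2 + 1" using True by (simp add: M_def c)
  show ?thesis
  proof (intro conjI allI impI)
    show "M \<le> n" using True M by linarith
    fix m assume "m \<le> n"
    show "f_cube n m \<le> f_cube n M"
    proof (cases "m \<le> M")
      case True
      then show ?thesis
      proof (induction rule: inc_induct)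
        case (step k)
        have "f_cube n k \<le> f_cube n (Suc k)"
          using up[OF \<open>n \<ge> 2\<close>] step(2) M by (intro up[OF \<open>n \<ge> 2\<close>]) linarith
        then show ?case using step by linarith
      qed simp
    next
      case False
      then have "M \<le> m" by simp
      then show ?thesis
      proof (induction rule: dec_induct)
        case (step k)
        have "f_cube n (Suc k) \<le> f_cube n k" using down step(1) M by (intro down) linarith
        then show ?case using step by linarith
      qed simp
    qed
  qed
qed

end
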